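(* Let $\mathcal{T}$ be a pattern set on an image $I$, let $I_0\subseteq I$ be a subimage, and let $\mathcal{M}=\{T\cap I_0\mid T\in\mathcal{T}\}$ (assumed to be a pattern set on $I_0$). Then for $L\in\{\mathrm{OR},\mathrm{SUM},\mathrm{OR2},\mathrm{SUM2}\}$, $L(\mathcal{M})\leqslant L(\mathcal{T})$.
   Context: Image: a finite set $I$ of pixel variables; a subimage is a subset of $I$. A pattern is a nonempty subset of the image; a pattern set $\mathcal{T}=\{T_k\}_{k=1}^m$ is a nonempty set of $m$ distinct patterns; computing it means computing simultaneously $y_k=\sum_{p\in T_k}p$ for a commutative semigroup operation. A circuit is a directed acyclic graph with one input node of fanin zero per pixel and $m$ output nodes of fanout zero; each node of nonzero fanin (gate) may have any positive number of incoming edges and computes the semigroup sum of its in-neighbours. Size = number of edges. A circuit computes $\mathcal{T}$ if for all input values each output $y_k$ equals $\sum_{p\in T_k}p$. $\mathrm{OR}(\mathcal{T})$ (resp. $\mathrm{SUM}(\mathcal{T})$) is the minimal size of a circuit computing $\mathcal{T}$ over $(\{0,1\},\vee)$ (resp. $(\mathbb{N},+)$). $\mathrm{OR2}(\mathcal{T})$ (resp. $\mathrm{SUM2}(\mathcal{T})$) is the minimal number of gates of a circuit computing $\mathcal{T}$ over $(\{0,1\},\vee)$ (resp. $(\mathbb{N},+)$) in which every node has fanin at most $2$. *)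

theory Defs
  imports Main
begin

definition pattern_set :: "'p set \<Rightarrow> 'p set set \<Rightarrow> bool" where
  "pattern_set I \<T> \<longleftrightarrow> finite I \<and> finite \<T> \<and> \<T> \<noteq> {} \<and>
     (\<forall>T\<in>\<T>. T \<noteq> {} \<and> T \<subseteq> I)"

definition is_circuit :: "'p set \<Rightarrow> 'p set set \<Rightarrow> nat set \<Rightarrow> (nat \<times> nat) set
    \<Rightarrow> ('p \<Rightarrow> nat) \<Rightarrow> ('p set \<Rightarrow> nat) \<Rightarrow> bool" where
  "is_circuit I \<T> V E inp out \<longleftrightarrow>
     finite V \<and> E \<subseteq> V \<times> V \<and> acyclic E \<and>
     inj_on inp I \<and> inp ` I \<subseteq> V \<and> (\<forall>p\<in>I. \<forall>u. (u, inp p) \<notin> E) \<and>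
     (\<forall>v\<in>V. (\<forall>u. (u, v) \<notin> E) \<longrightarrow> v \<in> inp ` I) \<and>
     inj_on out \<T> \<and> out ` \<T> \<subseteq> V \<and> (\<forall>T\<in>\<T>. \<forall>w. (out T, w) \<notin> E)"

definition computes_or :: "'p set \<Rightarrow> 'p set set \<Rightarrow> nat set \<Rightarrow> (nat \<times> nat) set
    \<Rightarrow> ('p \<Rightarrow> nat) \<Rightarrow> ('p set \<Rightarrow> nat) \<Rightarrow> bool" where
  "computes_or I \<T> V E inp out \<longleftrightarrow>
     (\<forall>(x :: 'p \<Rightarrow> bool) (val :: nat \<Rightarrow> bool).
        (\<forall>p\<in>I. val (inp p) = x p) \<and>
        (\<forall>g\<in>V. (\<exists>u. (u, g) \<in> E) \<longrightarrow> val g = (\<exists>u. (u, g) \<in> E \<and> val u))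
        \<longrightarrow> (\<forall>T\<in>\<T>. val (out T) = (\<exists>p\<in>T. x p)))"

definition computes_sum :: "'p set \<Rightarrow> 'p set set \<Rightarrow> nat set \<Rightarrow> (nat \<times> nat) set
    \<Rightarrow> ('p \<Rightarrow> nat) \<Rightarrow> ('p set \<Rightarrow> nat) \<Rightarrow> bool" where
  "computes_sum I \<T> V E inp out \<longleftrightarrow>
     (\<forall>(x :: 'p \<Rightarrow> nat) (val :: nat \<Rightarrow> nat).
        (\<forall>p\<in>I. val (inp p) = x p) \<and>
        (\<forall>g\<in>V. (\<exists>u. (u, g) \<in> E) \<longrightarrow> val g = (\<Sum>u\<in>{u. (u, g) \<in> E}. val u))
        \<longrightarrow> (\<forall>T\<in>\<T>. val (out T) = (\<Sum>p\<in>T. x p)))"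

definition fanin_le2 :: "nat set \<Rightarrow> (nat \<times> nat) set \<Rightarrow> bool" where
  "fanin_le2 V E \<longleftrightarrow> (\<forall>v\<in>V. card {u. (u, v) \<in> E} \<le> 2)"

definition num_gates :: "nat set \<Rightarrow> (nat \<times> nat) set \<Rightarrow> nat" where
  "num_gates V E = card {v\<in>V. \<exists>u. (u, v) \<in> E}"

definition OR_cc :: "'p set \<Rightarrow> 'p set set \<Rightarrow> nat" where
  "OR_cc I \<T> = (LEAST s. \<exists>V E inp out. is_circuit I \<T> V E inp out \<and>
      computes_or I \<T> V E inp out \<and> s = card E)"

definition SUM_cc :: "'p set \<Rightarrow> 'p set set \<Rightarrow> nat" where
  "SUM_cc I \<T> = (LEAST s. \<exists>V E inp out. is_circuit I \<T> V E inp out \<and>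
      computes_sum I \<T> V E inp out \<and> s = card E)"

definition OR2_cc :: "'p set \<Rightarrow> 'p set set \<Rightarrow> nat" where
  "OR2_cc I \<T> = (LEAST s. \<exists>V E inp out. is_circuit I \<T> V E inp out \<and> fanin_le2 V E \<and>
      computes_or I \<T> V E inp out \<and> s = num_gates V E)"

definition SUM2_cc :: "'p set \<Rightarrow> 'p set set \<Rightarrow> nat" where
  "SUM2_cc I \<T> = (LEAST s. \<exists>V E inp out. is_circuit I \<T> V E inp out \<and> fanin_le2 V E \<and>
      computes_sum I \<T> V E inp out \<and> s = num_gates V E)"

end

theory Submission
  imports Defs "HOL-Library.Nat_Bijection"
begin


lemma circD:
  assumes "is_circuit I \<T> V E inp out"
  shows "finite V" "E \<subseteq> V \<times> V" "acyclic E" "inj_on inp I" "inp ` I \<subseteq> V"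
    "\<And>p u. p \<in> I \<Longrightarrow> (u, inp p) \<notin> E"
    "\<And>v. v \<in> V \<Longrightarrow> \<forall>u. (u, v) \<notin> E \<Longrightarrow> v \<in> inp ` I"
    "inj_on out \<T>" "out ` \<T> \<subseteq> V" "\<And>T w. T \<in> \<T> \<Longrightarrow> (out T, w) \<notin> E"
  using assms unfolding is_circuit_def by simp_all

lemma circ_finE: assumes c: "is_circuit I \<T> V E inp out" shows "finite E"
  using circD(1,2)[OF c] by (meson finite_SigmaI finite_subset)

definition alive :: "(nat \<times> nat) set \<Rightarrow> ('p \<Rightarrow> nat) \<Rightarrow> 'p set \<Rightarrow> nat \<Rightarrow> bool" where
  "alive E inp I0 v \<longleftrightarrow> (\<exists>q\<in>I0. (inp q, v) \<in> E\<^sup>*)"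

lemma alive_step: "alive E inp I0 u \<Longrightarrow> (u, v) \<in> E \<Longrightarrow> alive E inp I0 v"
  unfolding alive_def by (meson rtrancl.rtrancl_into_rtrancl)

lemma alive_pred:
  assumes "alive E inp I0 v" "v \<notin> inp ` I0"
  shows "\<exists>u. (u, v) \<in> E \<and> alive E inp I0 u"
proof -
  obtain q where q: "q \<in> I0" "(inp q, v) \<in> E\<^sup>*" using assms(1) unfolding alive_def by blast
  from q(2) show ?thesis
  proof (cases rule: rtranclE)
    case base then show ?thesis using assms(2) q(1) by blast
  next
    case (step u) then show ?thesis using q(1) unfolding alive_def by blast
  qed
qed

lemma alive_input:
  assumes c: "is_circuit I \<T> V E inp out" and "I0 \<subseteq> I" "p \<in> I"
  shows "alive E inp I0 (inp p) \<longleftrightarrow> p \<in> I0"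
proof
  assume "alive E inp I0 (inp p)"
  then obtain q where q: "q \<in> I0" "(inp q, inp p) \<in> E\<^sup>*" unfolding alive_def by blast
  from q(2) have "inp q = inp p"
  proof (cases rule: rtranclE)
    case (step u) then show ?thesis using circD(6)[OF c assms(3)] by blast
  qed simp
  moreover have "q \<in> I" using q(1) assms(2) by blast
  ultimately show "p \<in> I0" using circD(4)[OF c] assms(3) q(1) unfolding inj_on_def by metis
next
  assume "p \<in> I0" then show "alive E inp I0 (inp p)" unfolding alive_def by blast
qed

lemma gate_not_input:
  assumes c: "is_circuit I \<T> V E inp out" and "I0 \<subseteq> I" "(u, g) \<in> E"
  shows "g \<notin> inp ` I0"
  using circD(6)[OF c] assms(2,3) by blast

lemma or_alive:
  assumes c: "is_circuit I \<T> V E inp out" and I0: "I0 \<subseteq> I"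
    and co: "computes_or I \<T> V E inp out" and ne: "\<forall>T\<in>\<T>. T \<inter> I0 \<noteq> {}"
    and T: "T \<in> \<T>"
  shows "alive E inp I0 (out T)"
proof -
  let ?x = "\<lambda>p. p \<in> I0" and ?val = "alive E inp I0"
  have h1: "\<forall>p\<in>I. ?val (inp p) = ?x p" using alive_input[OF c I0] by blast
  have h2: "\<forall>g\<in>V. (\<exists>u. (u, g) \<in> E) \<longrightarrow> ?val g = (\<exists>u. (u, g) \<in> E \<and> ?val u)"
  proof (intro ballI impI)
    fix g assume "g \<in> V" "\<exists>u. (u, g) \<in> E"
    then have "g \<notin> inp ` I0" using gate_not_input[OF c I0] by blast
    then show "?val g = (\<exists>u. (u, g) \<in> E \<and> ?val u)"
      using alive_pred[of E inp I0 g] alive_step[of E inp I0 _ g] by blast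
  qed
  have "?val (out T) = (\<exists>p\<in>T. ?x p)"
    using co[unfolded computes_or_def, rule_format, where x="\<lambda>p. p \<in> I0" and val="alive E inp I0", OF conjI[OF h1 h2] T] .
  then show ?thesis using ne T by blast
qed

lemma exists_val:
  fixes x :: "'p \<Rightarrow> nat"
  assumes c: "is_circuit I \<T> V E inp out"
  shows "\<exists>val. (\<forall>p\<in>I. val (inp p) = x p) \<and>
     (\<forall>g. (\<exists>u. (u, g) \<in> E) \<longrightarrow> val g = (\<Sum>u\<in>{u. (u, g) \<in> E}. val u))"
proof -
  have wf: "wf E" using finite_acyclic_wf circ_finE[OF c] circD(3)[OF c] by blast
  define F where "F = (\<lambda>f g. if \<exists>u. (u, g) \<in> E then (\<Sum>u\<in>{u. (u, g) \<in> E}. f u) else x (inv_into I inp g))"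
  have adm: "adm_wf E F" unfolding adm_wf_def F_def by (auto intro: sum.cong)
  define val where "val = wfrec E F"
  have fx: "\<And>g. val g = F val g" using wfrec_fixpoint[OF wf adm] unfolding val_def by metis
  show ?thesis
  proof (intro exI conjI ballI allI impI)
    fix p assume p: "p \<in> I"
    then show "val (inp p) = x p" using fx[of "inp p"] circD(6)[OF c p] circD(4)[OF c]
      unfolding F_def by auto
  next
    fix g assume "\<exists>u. (u, g) \<in> E"
    then show "val g = (\<Sum>u\<in>{u. (u, g) \<in> E}. val u)" using fx[of g] unfolding F_def by auto
  qed
qed

lemma sum_alive:
  assumes c: "is_circuit I \<T> V E inp out" and I0: "I0 \<subseteq> I"
    and co: "computes_sum I \<T> V E inp out" and ne: "\<forall>T\<in>\<T>. T \<inter> I0 \<noteq> {}"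
    and T: "T \<in> \<T>" and fT: "finite T"
  shows "alive E inp I0 (out T)"
proof -
  define x where "x = (\<lambda>p. if p \<in> I0 then 1::nat else 0)"
  obtain val where v1: "\<forall>p\<in>I. val (inp p) = x p"
    and v2: "\<forall>g. (\<exists>u. (u, g) \<in> E) \<longrightarrow> val g = (\<Sum>u\<in>{u. (u, g) \<in> E}. val u)"
    using exists_val[OF c] by blast
  have wf: "wf E" using finite_acyclic_wf circ_finE[OF c] circD(3)[OF c] by blast
  have key: "v \<in> V \<longrightarrow> val v \<noteq> 0 \<longrightarrow> alive E inp I0 v" for v
  proof (induction v rule: wf_induct_rule[OF wf])
    case (1 v)
    show ?case
    proof (intro impI)
      assume vV: "v \<in> V" and nz: "val v \<noteq> 0"
      show "alive E inp I0 v"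
      proof (cases "\<exists>u. (u, v) \<in> E")
        case True
        then have "val v = (\<Sum>u\<in>{u. (u, v) \<in> E}. val u)" using v2 by blast
        then obtain u where u: "(u, v) \<in> E" "val u \<noteq> 0" using nz
          by (metis (no_types, lifting) mem_Collect_eq sum.neutral)
        have "u \<in> V" using u(1) circD(2)[OF c] by blast
        then have "alive E inp I0 u" using 1 u by blast
        then show ?thesis using alive_step u(1) by blast
      next
        case False
        then obtain p where p: "p \<in> I" "v = inp p" using vV circD(7)[OF c] by blast
        then have "p \<in> I0" using v1 nz unfolding x_def by (auto split: if_splits)
        then show ?thesis using p unfolding alive_def by blast
      qed
    qed
  qed
  have v2': "\<forall>g\<in>V. (\<exists>u. (u, g) \<in> E) \<longrightarrow> val g = (\<Sum>u\<in>{u. (u, g) \<in> E}. val u)"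
    using v2 by blast
  have "val (out T) = (\<Sum>p\<in>T. x p)"
    using co[unfolded computes_sum_def, rule_format, where x=x and val=val, OF conjI[OF v1 v2'] T] .
  moreover have "(\<Sum>p\<in>T. x p) \<noteq> 0"
  proof -
    obtain p where "p \<in> T" "p \<in> I0" using ne T by blast
    then have "x p \<le> (\<Sum>p\<in>T. x p)" using fT by (intro member_le_sum) auto
    then show ?thesis using \<open>p \<in> I0\<close> unfolding x_def by auto
  qed
  moreover have "out T \<in> V" using circD(9)[OF c] T by blast
  ultimately show ?thesis using key by auto
qed



definition redV where "redV V E inp I0 = {v\<in>V. alive E inp I0 v}"
definition redE where "redE E inp I0 = {(u, v). (u, v) \<in> E \<and> alive E inp I0 u \<and> alive E inp I0 v}"
definition redout :: "'p set set \<Rightarrow> ('p set \<Rightarrow> nat) \<Rightarrow> 'p set \<Rightarrow> 'p set \<Rightarrow> nat" where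
  "redout \<T> out I0 S = out (SOME T. T \<in> \<T> \<and> T \<inter> I0 = S)"

lemma redout_some:
  assumes "S \<in> (\<lambda>T. T \<inter> I0) ` \<T>"
  shows "(SOME T. T \<in> \<T> \<and> T \<inter> I0 = S) \<in> \<T> \<and> (SOME T. T \<in> \<T> \<and> T \<inter> I0 = S) \<inter> I0 = S"
  using assms by (rule imageE) (rule someI, blast)

lemma red_circuit:
  assumes c: "is_circuit I \<T> V E inp out" and I0: "I0 \<subseteq> I"
    and AL: "\<forall>T\<in>\<T>. alive E inp I0 (out T)"
  shows "is_circuit I0 ((\<lambda>T. T \<inter> I0) ` \<T>) (redV V E inp I0) (redE E inp I0) inp (redout \<T> out I0)"
  unfolding is_circuit_def
proof (intro conjI ballI allI impI)
  show "finite (redV V E inp I0)" using circD(1)[OF c] unfolding redV_def by simp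
  show "redE E inp I0 \<subseteq> redV V E inp I0 \<times> redV V E inp I0"
    using circD(2)[OF c] unfolding redV_def redE_def by blast
  show "acyclic (redE E inp I0)" using circD(3)[OF c] by (rule acyclic_subset) (auto simp: redE_def)
  show "inj_on inp I0" using circD(4)[OF c] I0 by (rule inj_on_subset)
  show "inp ` I0 \<subseteq> redV V E inp I0" using circD(5)[OF c] I0 unfolding redV_def alive_def by blast
  show "(u, inp p) \<notin> redE E inp I0" if "p \<in> I0" for p u
    using circD(6)[OF c] that I0 unfolding redE_def by blast
  show "v \<in> inp ` I0" if "v \<in> redV V E inp I0" "\<forall>u. (u, v) \<notin> redE E inp I0" for v
  proof (rule ccontr)
    assume "v \<notin> inp ` I0"
    moreover have "alive E inp I0 v" using that(1) unfolding redV_def by blast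
    ultimately obtain u where "(u, v) \<in> E" "alive E inp I0 u" using alive_pred by blast
    then show False using that \<open>alive E inp I0 v\<close> unfolding redE_def by blast
  qed
  show "inj_on (redout \<T> out I0) ((\<lambda>T. T \<inter> I0) ` \<T>)"
  proof (rule inj_onI)
    fix S1 S2 assume s: "S1 \<in> (\<lambda>T. T \<inter> I0) ` \<T>" "S2 \<in> (\<lambda>T. T \<inter> I0) ` \<T>"
      "redout \<T> out I0 S1 = redout \<T> out I0 S2"
    note a = redout_some[OF s(1)] and b = redout_some[OF s(2)]
    have "(SOME T. T \<in> \<T> \<and> T \<inter> I0 = S1) = (SOME T. T \<in> \<T> \<and> T \<inter> I0 = S2)"
      using circD(8)[OF c] a b s(3) unfolding redout_def inj_on_def by blast
    then show "S1 = S2" using a b by metis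
  qed
  show "redout \<T> out I0 ` (\<lambda>T. T \<inter> I0) ` \<T> \<subseteq> redV V E inp I0"
  proof
    fix v assume "v \<in> redout \<T> out I0 ` (\<lambda>T. T \<inter> I0) ` \<T>"
    then obtain S where S: "S \<in> (\<lambda>T. T \<inter> I0) ` \<T>" "v = redout \<T> out I0 S" by blast
    note a = redout_some[OF S(1)]
    then show "v \<in> redV V E inp I0" using S(2) AL circD(9)[OF c] unfolding redout_def redV_def by blast
  qed
  show "(redout \<T> out I0 S, w) \<notin> redE E inp I0" if "S \<in> (\<lambda>T. T \<inter> I0) ` \<T>" for S w
    using redout_some[OF that] circD(10)[OF c] unfolding redout_def redE_def by blast
qed

lemma red_or:
  assumes c: "is_circuit I \<T> V E inp out" and I0: "I0 \<subseteq> I"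
    and AL: "\<forall>T\<in>\<T>. alive E inp I0 (out T)"
    and co: "computes_or I \<T> V E inp out"
  shows "computes_or I0 ((\<lambda>T. T \<inter> I0) ` \<T>) (redV V E inp I0) (redE E inp I0) inp (redout \<T> out I0)"
  unfolding computes_or_def
proof (intro allI impI ballI)
  fix x' :: "'a \<Rightarrow> bool" and val' :: "nat \<Rightarrow> bool" and S
  assume h: "(\<forall>p\<in>I0. val' (inp p) = x' p) \<and>
       (\<forall>g\<in>redV V E inp I0. (\<exists>u. (u, g) \<in> redE E inp I0) \<longrightarrow>
           val' g = (\<exists>u. (u, g) \<in> redE E inp I0 \<and> val' u))"
    and S: "S \<in> (\<lambda>T. T \<inter> I0) ` \<T>"
  define x where "x = (\<lambda>p. p \<in> I0 \<and> x' p)"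
  define val where "val = (\<lambda>v. alive E inp I0 v \<and> val' v)"
  have h1: "\<forall>p\<in>I. val (inp p) = x p"
    using h alive_input[OF c I0] unfolding x_def val_def by blast
  have h2: "\<forall>g\<in>V. (\<exists>u. (u, g) \<in> E) \<longrightarrow> val g = (\<exists>u. (u, g) \<in> E \<and> val u)"
  proof (intro ballI impI)
    fix g assume g: "g \<in> V" "\<exists>u. (u, g) \<in> E"
    show "val g = (\<exists>u. (u, g) \<in> E \<and> val u)"
    proof (cases "alive E inp I0 g")
      case True
      have "g \<notin> inp ` I0" using gate_not_input[OF c I0] g(2) by blast
      then obtain u0 where "(u0, g) \<in> E" "alive E inp I0 u0" using alive_pred True by blast
      then have "\<exists>u. (u, g) \<in> redE E inp I0" using True unfolding redE_def by blast
      moreover have "g \<in> redV V E inp I0" using g True unfolding redV_def by blast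
      ultimately have "val' g = (\<exists>u. (u, g) \<in> redE E inp I0 \<and> val' u)" using h by blast
      then show ?thesis using True unfolding val_def redE_def by auto
    next
      case False
      then show ?thesis using alive_step unfolding val_def by blast
    qed
  qed
  note r = redout_some[OF S]
  let ?T = "SOME T. T \<in> \<T> \<and> T \<inter> I0 = S"
  have "val (out ?T) = (\<exists>p\<in>?T. x p)"
    using co[unfolded computes_or_def, rule_format, where x=x and val=val, OF conjI[OF h1 h2]] r by blast
  moreover have "val (out ?T) = val' (out ?T)" using AL r unfolding val_def by blast
  ultimately show "val' (redout \<T> out I0 S) = (\<exists>p\<in>S. x' p)"
    using r unfolding redout_def x_def by blast
qed

lemma red_sum:
  assumes c: "is_circuit I \<T> V E inp out" and I0: "I0 \<subseteq> I"
    and AL: "\<forall>T\<in>\<T>. alive E inp I0 (out T)"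
    and co: "computes_sum I \<T> V E inp out" and fin: "\<forall>T\<in>\<T>. finite T"
  shows "computes_sum I0 ((\<lambda>T. T \<inter> I0) ` \<T>) (redV V E inp I0) (redE E inp I0) inp (redout \<T> out I0)"
  unfolding computes_sum_def
proof (intro allI impI ballI)
  fix x' :: "'a \<Rightarrow> nat" and val' :: "nat \<Rightarrow> nat" and S
  assume h: "(\<forall>p\<in>I0. val' (inp p) = x' p) \<and>
       (\<forall>g\<in>redV V E inp I0. (\<exists>u. (u, g) \<in> redE E inp I0) \<longrightarrow>
           val' g = (\<Sum>u\<in>{u. (u, g) \<in> redE E inp I0}. val' u))"
    and S: "S \<in> (\<lambda>T. T \<inter> I0) ` \<T>"
  define x where "x = (\<lambda>p. if p \<in> I0 then x' p else 0)"
  define val where "val = (\<lambda>v. if alive E inp I0 v then val' v else 0)"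
  have fE: "finite E" by (rule circ_finE[OF c])
  have h1: "\<forall>p\<in>I. val (inp p) = x p"
    using h alive_input[OF c I0] unfolding x_def val_def by auto
  have h2: "\<forall>g\<in>V. (\<exists>u. (u, g) \<in> E) \<longrightarrow> val g = (\<Sum>u\<in>{u. (u, g) \<in> E}. val u)"
  proof (intro ballI impI)
    fix g assume g: "g \<in> V" "\<exists>u. (u, g) \<in> E"
    have finP: "finite {u. (u, g) \<in> E}"
    proof -
      have "{u. (u, g) \<in> E} = fst ` (E \<inter> {p. snd p = g})" by force
      then show ?thesis using fE by simp
    qed
    show "val g = (\<Sum>u\<in>{u. (u, g) \<in> E}. val u)"
    proof (cases "alive E inp I0 g")
      case True
      have "g \<notin> inp ` I0" using gate_not_input[OF c I0] g(2) by blast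
      then obtain u0 where "(u0, g) \<in> E" "alive E inp I0 u0" using alive_pred True by blast
      then have "\<exists>u. (u, g) \<in> redE E inp I0" using True unfolding redE_def by blast
      moreover have "g \<in> redV V E inp I0" using g True unfolding redV_def by blast
      ultimately have e: "val' g = (\<Sum>u\<in>{u. (u, g) \<in> redE E inp I0}. val' u)" using h by blast
      have sub: "{u. (u, g) \<in> redE E inp I0} \<subseteq> {u. (u, g) \<in> E}" unfolding redE_def by blast
      have "(\<Sum>u\<in>{u. (u, g) \<in> E}. val u) = (\<Sum>u\<in>{u. (u, g) \<in> redE E inp I0}. val u)"
        by (rule sum.mono_neutral_right[OF finP sub]) (auto simp: val_def redE_def True)
      also have "\<dots> = (\<Sum>u\<in>{u. (u, g) \<in> redE E inp I0}. val' u)"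
        by (rule sum.cong) (auto simp: val_def redE_def)
      finally show ?thesis using e True unfolding val_def by simp
    next
      case False
      then have "\<forall>u\<in>{u. (u, g) \<in> E}. val u = 0" using alive_step[of E inp I0 _ g] unfolding val_def by auto
      then show ?thesis using False unfolding val_def by simp
    qed
  qed
  note r = redout_some[OF S]
  let ?T = "SOME T. T \<in> \<T> \<and> T \<inter> I0 = S"
  have "val (out ?T) = (\<Sum>p\<in>?T. x p)"
    using co[unfolded computes_sum_def, rule_format, where x=x and val=val, OF conjI[OF h1 h2]] r by blast
  also have "\<dots> = (\<Sum>p\<in>?T \<inter> I0. x' p)"
    using fin r unfolding x_def by (simp add: sum.If_cases)
  finally have "val (out ?T) = (\<Sum>p\<in>S. x' p)" using r by simp
  moreover have "val (out ?T) = val' (out ?T)" using AL r unfolding val_def by simp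
  ultimately show "val' (redout \<T> out I0 S) = (\<Sum>p\<in>S. x' p)"
    unfolding redout_def by simp
qed

lemma red_card: "is_circuit I \<T> V E inp out \<Longrightarrow> card (redE E inp I0) \<le> card E"
  by (rule card_mono[OF circ_finE]) (auto simp: redE_def)

lemma red_fanin:
  assumes c: "is_circuit I \<T> V E inp out" and f: "fanin_le2 V E"
  shows "fanin_le2 (redV V E inp I0) (redE E inp I0)"
  unfolding fanin_le2_def
proof
  fix v assume v: "v \<in> redV V E inp I0"
  have finP: "finite {u. (u, v) \<in> E}"
  proof -
    have "{u. (u, v) \<in> E} = fst ` (E \<inter> {p. snd p = v})" by force
    then show ?thesis using circ_finE[OF c] by simp
  qed
  have "card {u. (u, v) \<in> redE E inp I0} \<le> card {u. (u, v) \<in> E}"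
    by (rule card_mono[OF finP]) (auto simp: redE_def)
  also have "\<dots> \<le> 2" using f v unfolding fanin_le2_def redV_def by blast
  finally show "card {u. (u, v) \<in> redE E inp I0} \<le> 2" .
qed

lemma red_gates:
  assumes c: "is_circuit I \<T> V E inp out"
  shows "num_gates (redV V E inp I0) (redE E inp I0) \<le> num_gates V E"
  unfolding num_gates_def
  by (rule card_mono) (use circD(1)[OF c] in \<open>auto simp: redV_def redE_def\<close>)



lemma atMost_lessThan_pred: "0 < (n::nat) \<Longrightarrow> {..n - 1} = {..<n}" by auto

lemma even_ne_odd: "(2 * a :: nat) \<noteq> Suc (2 * b)" by presburger

locale ccons =
  fixes I :: "'p set" and \<T> :: "'p set set" and e :: "'p \<Rightarrow> nat" and t :: "'p set \<Rightarrow> nat"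
  assumes fI: "finite I" and fT: "finite \<T>" and pats: "\<forall>T\<in>\<T>. T \<noteq> {} \<and> T \<subseteq> I"
    and ie: "inj_on e I" and it: "inj_on t \<T>"
begin

definition L :: "'p set \<Rightarrow> 'p list" where "L T = (SOME xs. set xs = T \<and> distinct xs)"
definition ci :: "'p \<Rightarrow> nat" where "ci p = 2 * e p"
definition cg :: "'p set \<Rightarrow> nat \<Rightarrow> nat" where "cg T j = Suc (2 * prod_encode (t T, j))"
definition cV :: "nat set" where
  "cV = ci ` I \<union> {cg T j | T j. T \<in> \<T> \<and> j < length (L T)}"
definition cE :: "(nat \<times> nat) set" where
  "cE = {(ci (L T ! j), cg T j) | T j. T \<in> \<T> \<and> j < length (L T)} \<union>
        {(cg T j, cg T (Suc j)) | T j. T \<in> \<T> \<and> Suc j < length (L T)}"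
definition cout :: "'p set \<Rightarrow> nat" where "cout T = cg T (length (L T) - 1)"

lemma L_props: assumes "T \<in> \<T>" shows "set (L T) = T" "distinct (L T)" "0 < length (L T)"
proof -
  have "finite T" using pats assms fI finite_subset by blast
  then have "set (L T) = T \<and> distinct (L T)" unfolding L_def by (rule someI_ex[OF finite_distinct_list])
  then show "set (L T) = T" "distinct (L T)" by auto
  then show "0 < length (L T)" using pats assms by auto
qed

lemma L_in: "T \<in> \<T> \<Longrightarrow> j < length (L T) \<Longrightarrow> L T ! j \<in> I"
  using L_props(1) pats nth_mem by blast

lemma ci_cg [simp]: "ci p \<noteq> cg T j" "cg T j \<noteq> ci p"
  unfolding ci_def cg_def using even_ne_odd by metis+

lemma cg_eq: "T \<in> \<T> \<Longrightarrow> T' \<in> \<T> \<Longrightarrow> cg T j = cg T' j' \<longleftrightarrow> T = T' \<and> j = j'"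
  unfolding cg_def using it unfolding inj_on_def by auto

lemma ci_eq: "p \<in> I \<Longrightarrow> q \<in> I \<Longrightarrow> ci p = ci q \<longleftrightarrow> p = q"
  unfolding ci_def using ie unfolding inj_on_def by auto

lemma preds_ci: "(u, ci p) \<notin> cE"
  unfolding cE_def by auto

lemma preds_cg:
  assumes T: "T \<in> \<T>" and j: "j < length (L T)"
  shows "{u. (u, cg T j) \<in> cE} = (if j = 0 then {ci (L T ! 0)} else {ci (L T ! j), cg T (j - 1)})"
  using T j unfolding cE_def by (auto simp: cg_eq dest: gr0_implies_Suc)

lemma cg_in: "T \<in> \<T> \<Longrightarrow> j < length (L T) \<Longrightarrow> cg T j \<in> cV"
  unfolding cV_def by blast

lemma circuit: "is_circuit I \<T> cV cE ci cout"
  unfolding is_circuit_def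
proof (intro conjI ballI allI impI)
  have "{cg T j | T j. T \<in> \<T> \<and> j < length (L T)} = (\<lambda>(T, j). cg T j) ` (SIGMA T:\<T>. {..<length (L T)})"
    by auto
  then show "finite cV" unfolding cV_def using fI fT by simp
  show "cE \<subseteq> cV \<times> cV" unfolding cE_def cV_def using L_in by fastforce
  have "cE \<subseteq> inv_image less_than (\<lambda>v. if even v then 0 else Suc (snd (prod_decode (v div 2))))"
    unfolding cE_def ci_def cg_def by auto
  then show "acyclic cE" by (rule acyclic_subset[OF wf_acyclic[OF wf_inv_image[OF wf_less_than]]])
  show "inj_on ci I" using ci_eq by (meson inj_onI)
  show "ci ` I \<subseteq> cV" unfolding cV_def by blast
  show "(u, ci p) \<notin> cE" for p u by (rule preds_ci)
  show "v \<in> ci ` I" if "v \<in> cV" "\<forall>u. (u, v) \<notin> cE" for v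
    using that unfolding cV_def cE_def by blast
  show "inj_on cout \<T>" unfolding cout_def by (rule inj_onI) (simp add: cg_eq)
  show "cout ` \<T> \<subseteq> cV" unfolding cout_def using L_props(3) cg_in by auto
  show "(cout T, w) \<notin> cE" if "T \<in> \<T>" for T w
    using that L_props(3)[OF that] unfolding cE_def cout_def by (auto simp: cg_eq)
qed


lemma fanin: "fanin_le2 cV cE"
  unfolding fanin_le2_def
proof
  fix v assume "v \<in> cV"
  then consider p where "v = ci p" | T j where "T \<in> \<T>" "j < length (L T)" "v = cg T j"
    unfolding cV_def by blast
  then show "card {u. (u, v) \<in> cE} \<le> 2"
  proof cases
    case 1 then show ?thesis using preds_ci by simp
  next
    case 2 then show ?thesis using preds_cg[OF 2(1,2)] by (simp add: card_insert_le_m1)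
  qed
qed

lemma gate_or:
  fixes x :: "'p \<Rightarrow> bool" and val :: "nat \<Rightarrow> bool"
  assumes h1: "\<forall>p\<in>I. val (ci p) = x p"
    and h2: "\<forall>g\<in>cV. (\<exists>u. (u, g) \<in> cE) \<longrightarrow> val g = (\<exists>u. (u, g) \<in> cE \<and> val u)"
    and T: "T \<in> \<T>"
  shows "j < length (L T) \<Longrightarrow> val (cg T j) = (\<exists>i\<le>j. x (L T ! i))"
proof (induction j)
  case 0
  have "val (cg T 0) = (\<exists>u. (u, cg T 0) \<in> cE \<and> val u)"
    using h2 cg_in[OF T 0] preds_cg[OF T 0] by auto
  also have "\<dots> = val (ci (L T ! 0))" using preds_cg[OF T 0] by (simp add: set_eq_iff)
  finally show ?case using h1 L_in[OF T 0] by simp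
next
  case (Suc j)
  have "val (cg T (Suc j)) = (\<exists>u. (u, cg T (Suc j)) \<in> cE \<and> val u)"
    using h2 cg_in[OF T Suc.prems] preds_cg[OF T Suc.prems] by auto
  also have "\<dots> = (val (ci (L T ! Suc j)) \<or> val (cg T j))" using preds_cg[OF T Suc.prems] by (simp add: set_eq_iff) blast
  finally show ?case using h1 L_in[OF T Suc.prems] Suc by (auto simp: le_Suc_eq)
qed

lemma gate_sum:
  fixes x :: "'p \<Rightarrow> nat" and val :: "nat \<Rightarrow> nat"
  assumes h1: "\<forall>p\<in>I. val (ci p) = x p"
    and h2: "\<forall>g\<in>cV. (\<exists>u. (u, g) \<in> cE) \<longrightarrow> val g = (\<Sum>u\<in>{u. (u, g) \<in> cE}. val u)"
    and T: "T \<in> \<T>"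
  shows "j < length (L T) \<Longrightarrow> val (cg T j) = (\<Sum>i\<le>j. x (L T ! i))"
proof (induction j)
  case 0
  have "val (cg T 0) = (\<Sum>u\<in>{u. (u, cg T 0) \<in> cE}. val u)"
    using h2 cg_in[OF T 0] preds_cg[OF T 0] by auto
  also have "\<dots> = val (ci (L T ! 0))" using preds_cg[OF T 0] by auto
  finally show ?case using h1 L_in[OF T 0] by simp
next
  case (Suc j)
  have "val (cg T (Suc j)) = (\<Sum>u\<in>{u. (u, cg T (Suc j)) \<in> cE}. val u)"
    using h2 cg_in[OF T Suc.prems] preds_cg[OF T Suc.prems] by auto
  also have "\<dots> = val (ci (L T ! Suc j)) + val (cg T j)" using preds_cg[OF T Suc.prems] by auto
  finally show ?case using h1 L_in[OF T Suc.prems] Suc by simp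
qed

lemma comp_or: "computes_or I \<T> cV cE ci cout"
  unfolding computes_or_def
proof (intro allI impI ballI)
  fix x :: "'p \<Rightarrow> bool" and val :: "nat \<Rightarrow> bool" and T
  assume h: "(\<forall>p\<in>I. val (ci p) = x p) \<and>
       (\<forall>g\<in>cV. (\<exists>u. (u, g) \<in> cE) \<longrightarrow> val g = (\<exists>u. (u, g) \<in> cE \<and> val u))" and T: "T \<in> \<T>"
  have l: "length (L T) - 1 < length (L T)" using L_props(3)[OF T] by simp
  have "val (cout T) = (\<exists>i\<le>length (L T) - 1. x (L T ! i))"
    unfolding cout_def using gate_or[OF conjunct1[OF h] conjunct2[OF h] T l] .
  also have "\<dots> = (\<exists>i<length (L T). x (L T ! i))" using L_props(3)[OF T] by (metis Suc_pred' less_Suc_eq_le)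
  also have "\<dots> = (\<exists>p\<in>set (L T). x p)" by (metis in_set_conv_nth)
  finally show "val (cout T) = (\<exists>p\<in>T. x p)" using L_props(1)[OF T] by simp
qed

lemma comp_sum: "computes_sum I \<T> cV cE ci cout"
  unfolding computes_sum_def
proof (intro allI impI ballI)
  fix x :: "'p \<Rightarrow> nat" and val :: "nat \<Rightarrow> nat" and T
  assume h: "(\<forall>p\<in>I. val (ci p) = x p) \<and>
       (\<forall>g\<in>cV. (\<exists>u. (u, g) \<in> cE) \<longrightarrow> val g = (\<Sum>u\<in>{u. (u, g) \<in> cE}. val u))" and T: "T \<in> \<T>"
  have l: "length (L T) - 1 < length (L T)" using L_props(3)[OF T] by simp
  have "val (cout T) = (\<Sum>i\<le>length (L T) - 1. x (L T ! i))"
    unfolding cout_def using gate_sum[OF conjunct1[OF h] conjunct2[OF h] T l] .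
  also have "{..length (L T) - 1} = {..<length (L T)}" using L_props(3)[OF T] atMost_lessThan_pred by blast
  also have "(\<Sum>i<length (L T). x (L T ! i)) = (\<Sum>p\<in>set (L T). x p)"
    by (rule sum.reindex_bij_betw[OF bij_betw_nth[OF L_props(2)[OF T] refl refl]])
  finally show "val (cout T) = (\<Sum>p\<in>T. x p)" using L_props(1)[OF T] by simp
qed

end


theorem proposition4:
  fixes I I0 :: "'p set" and \<T> :: "'p set set"
  assumes "pattern_set I \<T>"
    and "I0 \<subseteq> I"
    and "pattern_set I0 ((\<lambda>T. T \<inter> I0) ` \<T>)"
  shows "OR_cc I0 ((\<lambda>T. T \<inter> I0) ` \<T>) \<le> OR_cc I \<T> \<and>
         SUM_cc I0 ((\<lambda>T. T \<inter> I0) ` \<T>) \<le> SUM_cc I \<T> \<and>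
         OR2_cc I0 ((\<lambda>T. T \<inter> I0) ` \<T>) \<le> OR2_cc I \<T> \<and>
         SUM2_cc I0 ((\<lambda>T. T \<inter> I0) ` \<T>) \<le> SUM2_cc I \<T>"
proof -
  let ?M = "(\<lambda>T. T \<inter> I0) ` \<T>"
  have fI: "finite I" and fT: "finite \<T>" and pats: "\<forall>T\<in>\<T>. T \<noteq> {} \<and> T \<subseteq> I"
    using assms(1) unfolding pattern_set_def by auto
  have ne: "\<forall>T\<in>\<T>. T \<inter> I0 \<noteq> {}" using assms(3) unfolding pattern_set_def by auto
  have finT: "\<forall>T\<in>\<T>. finite T" using pats fI finite_subset by blast
  obtain e :: "'p \<Rightarrow> nat" and n where "inj_on e I" using finite_imp_inj_to_nat_seg[OF fI] by blast
  moreover obtain t :: "'p set \<Rightarrow> nat" and n where "inj_on t \<T>" using finite_imp_inj_to_nat_seg[OF fT] by blast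
  ultimately interpret C: ccons I \<T> e t using fI fT pats by unfold_locales
  note I0 = assms(2)
  have A: "OR_cc I0 ?M \<le> OR_cc I \<T>"
  proof -
    let ?P = "\<lambda>s. \<exists>V E inp out. is_circuit I \<T> V E inp out \<and> computes_or I \<T> V E inp out \<and> s = card E"
    have "?P (card C.cE)" using C.circuit C.comp_or by blast
    then have "?P (OR_cc I \<T>)" unfolding OR_cc_def by (rule LeastI)
    then obtain V E inp out where c: "is_circuit I \<T> V E inp out" and co: "computes_or I \<T> V E inp out"
      and s: "OR_cc I \<T> = card E" by blast
    have AL: "\<forall>T\<in>\<T>. alive E inp I0 (out T)" using or_alive[OF c I0 co ne] by blast
    have "OR_cc I0 ?M \<le> card (redE E inp I0)" unfolding OR_cc_def
      by (rule Least_le) (use red_circuit[OF c I0 AL] red_or[OF c I0 AL co] in blast)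
    then show ?thesis using red_card[OF c, of I0] s by simp
  qed
  have B: "SUM_cc I0 ?M \<le> SUM_cc I \<T>"
  proof -
    let ?P = "\<lambda>s. \<exists>V E inp out. is_circuit I \<T> V E inp out \<and> computes_sum I \<T> V E inp out \<and> s = card E"
    have "?P (card C.cE)" using C.circuit C.comp_sum by blast
    then have "?P (SUM_cc I \<T>)" unfolding SUM_cc_def by (rule LeastI)
    then obtain V E inp out where c: "is_circuit I \<T> V E inp out" and co: "computes_sum I \<T> V E inp out"
      and s: "SUM_cc I \<T> = card E" by blast
    have AL: "\<forall>T\<in>\<T>. alive E inp I0 (out T)" using sum_alive[OF c I0 co ne] finT by blast
    have "SUM_cc I0 ?M \<le> card (redE E inp I0)" unfolding SUM_cc_def
      by (rule Least_le) (use red_circuit[OF c I0 AL] red_sum[OF c I0 AL co finT] in blast)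
    then show ?thesis using red_card[OF c, of I0] s by simp
  qed
  have C: "OR2_cc I0 ?M \<le> OR2_cc I \<T>"
  proof -
    let ?P = "\<lambda>s. \<exists>V E inp out. is_circuit I \<T> V E inp out \<and> fanin_le2 V E \<and> computes_or I \<T> V E inp out \<and> s = num_gates V E"
    have "?P (num_gates C.cV C.cE)" using C.circuit C.comp_or C.fanin by blast
    then have "?P (OR2_cc I \<T>)" unfolding OR2_cc_def by (rule LeastI)
    then obtain V E inp out where c: "is_circuit I \<T> V E inp out" and co: "computes_or I \<T> V E inp out"
      and f: "fanin_le2 V E" and s: "OR2_cc I \<T> = num_gates V E" by blast
    have AL: "\<forall>T\<in>\<T>. alive E inp I0 (out T)" using or_alive[OF c I0 co ne] by blast
    have "OR2_cc I0 ?M \<le> num_gates (redV V E inp I0) (redE E inp I0)" unfolding OR2_cc_def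
      by (rule Least_le) (use red_circuit[OF c I0 AL] red_or[OF c I0 AL co] red_fanin[OF c f] in blast)
    then show ?thesis using red_gates[OF c, of I0] s by simp
  qed
  have D: "SUM2_cc I0 ?M \<le> SUM2_cc I \<T>"
  proof -
    let ?P = "\<lambda>s. \<exists>V E inp out. is_circuit I \<T> V E inp out \<and> fanin_le2 V E \<and> computes_sum I \<T> V E inp out \<and> s = num_gates V E"
    have "?P (num_gates C.cV C.cE)" using C.circuit C.comp_sum C.fanin by blast
    then have "?P (SUM2_cc I \<T>)" unfolding SUM2_cc_def by (rule LeastI)
    then obtain V E inp out where c: "is_circuit I \<T> V E inp out" and co: "computes_sum I \<T> V E inp out"
      and f: "fanin_le2 V E" and s: "SUM2_cc I \<T> = num_gates V E" by blast
    have AL: "\<forall>T\<in>\<T>. alive E inp I0 (out T)" using sum_alive[OF c I0 co ne] finT by blast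
    have "SUM2_cc I0 ?M \<le> num_gates (redV V E inp I0) (redE E inp I0)" unfolding SUM2_cc_def
      by (rule Least_le) (use red_circuit[OF c I0 AL] red_sum[OF c I0 AL co finT] red_fanin[OF c f] in blast)
    then show ?thesis using red_gates[OF c, of I0] s by simp
  qed
  show ?thesis using A B C D by blast
qed

end
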